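(* Let $f_1,\dots,f_\Lambda$ be candidate models, $\mathcal L:\{f_\lambda\}_{\lambda=1}^\Lambda\to\mathbb R$ a performance metric, $U:(0,1)\to\mathbb R_+$, and fix $\delta\in(0,1)$. Suppose the pairwise comparison subroutine $\mathcal A$ satisfies: for any two models $h_1,h_2\in\{f_\lambda\}_{\lambda=1}^\Lambda$, its output $\widehat h\in\{h_1,h_2\}$ satisfies \[ \mathbb P\big(\mathcal L(\widehat h)-\min\{\mathcal L(h_1),\mathcal L(h_2)\}\le U(\delta)\big)\ge1-\delta. \] Then the output $\widehat f$ of the tournament procedure (context) run with $\mathcal A$ satisfies \[ \mathbb P\Big(\mathcal L(\widehat f)-\min_{\lambda\in[\Lambda]}\mathcal L(f_\lambda)\le2U(\delta)\Big)\ge1-\Lambda^2\delta. \]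
   Context: Tournament procedure (ATOMS): $S=\{f_1,\dots,f_\Lambda\}$; while $|S|>1$: choose a pivot $f\in S$ uniformly at random; let $S'=\{f'\in S\setminus\{f\}:\mathcal A(f,f')=f'\}$, where $\mathcal A(f,f')\in\{f,f'\}$ is the model output by $\mathcal A$ on the pair; if $S'=\emptyset$ output $f$, otherwise set $S\leftarrow S'$. If $|S|=1$, output its unique element. *)

theory Defs
  imports "HOL-Probability.Probability"
begin

text \<open>The tournament procedure (ATOMS) on a set S of model indices.
  piv S is the pivot chosen from S, and A i j is the index output by the
  pairwise comparison subroutine on the pair (model i, model j), i being the pivot.
  The first argument is fuel; with fuel at least card S the fuel is never exhausted
  (each round removes the pivot), so atoms (card S) piv A S is the procedure.\<close>

fun atoms :: "nat \<Rightarrow> (nat set \<Rightarrow> nat) \<Rightarrow> (nat \<Rightarrow> nat \<Rightarrow> nat) \<Rightarrow> nat set \<Rightarrow> nat" where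
  "atoms 0 piv A S = piv S"
| "atoms (Suc n) piv A S =
     (if card S = 1 then the_elem S
      else (let f = piv S; S' = {g \<in> S - {f}. A f g = g}
            in if S' = {} then f else atoms n piv A S'))"

end

theory Submission
  imports Defs
begin

declare atoms.simps[simp del]

lemma atoms_det:
  fixes g :: "nat \<Rightarrow> real"
  assumes pv: "\<And>S. S \<subseteq> D \<Longrightarrow> S \<noteq> {} \<Longrightarrow> pv S \<in> S"
    and Aout: "\<And>i j. i \<in> D \<Longrightarrow> j \<in> D \<Longrightarrow> A i j \<in> {i, j}"
    and Agood: "\<And>i j. i \<in> D \<Longrightarrow> j \<in> D \<Longrightarrow> g (A i j) - min (g i) (g j) \<le> u"
    and u: "u \<ge> 0" and b: "b \<in> D" and bmin: "\<And>k. k \<in> D \<Longrightarrow> g b \<le> g k"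
  shows "S \<subseteq> D \<Longrightarrow> S \<noteq> {} \<Longrightarrow> finite S \<Longrightarrow> card S \<le> n \<Longrightarrow>
         (b \<in> S \<or> (\<forall>x\<in>S. g x \<le> g b + 2 * u)) \<Longrightarrow> g (atoms n pv A S) \<le> g b + 2 * u"
proof (induction n arbitrary: S)
  case 0
  then show ?case by simp
next
  case (Suc n)
  show ?case
  proof (cases "card S = 1")
    case True
    obtain x where x: "S = {x}" using True card_1_singletonE by blast
    have "atoms (Suc n) pv A S = the_elem S" by (simp only: True atoms.simps(2) if_True refl simp_thms)
    then show ?thesis using Suc.prems u x by auto
  next
    case False
    define p where "p = pv S"
    define S' where "S' = {x \<in> S - {p}. A p x = x}"
    have pS: "p \<in> S" using pv Suc.prems p_def by auto
    have pD: "p \<in> D" using pS Suc.prems by auto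
    have eq: "atoms (Suc n) pv A S = (if S' = {} then p else atoms n pv A S')"
      using False unfolding p_def S'_def atoms.simps(2) Let_def by (simp only: if_False simp_thms)
    have S'sub: "S' \<subseteq> S - {p}" by (auto simp: S'_def)
    have pbound: "g p \<le> g b + u" if "b \<in> S" "b \<noteq> p" "b \<notin> S'"
    proof -
      have "A p b \<noteq> b" using that by (auto simp: S'_def)
      hence "A p b = p" using Aout[OF pD b] by auto
      hence "g p - min (g p) (g b) \<le> u" using Agood[OF pD b] by simp
      moreover have "g b \<le> g p" using bmin pD by auto
      ultimately show ?thesis by (simp add: min_def split: if_splits)
    qed
    show ?thesis
    proof (cases "S' = {}")
      case True
      have out: "atoms (Suc n) pv A S = p" using eq True by (simp only: if_True simp_thms)
      have "g p \<le> g b + 2 * u"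
      proof (cases "b \<in> S")
        case bS: True
        show ?thesis
        proof (cases "b = p")
          case True then show ?thesis using u by simp
        next
          case False
          have "b \<notin> S'" using \<open>S' = {}\<close> by blast
          then have "g p \<le> g b + u" by (rule pbound[OF bS False])
          then show ?thesis using u by linarith
        qed
      next
        case False
        then have "\<forall>x\<in>S. g x \<le> g b + 2 * u" using Suc.prems(5) by blast
        then show ?thesis using pS by blast
      qed
      then show ?thesis unfolding out .
    next
      case ne: False
      have finSp: "finite (S - {p})" using Suc.prems(3) by simp
      have fin: "finite S'" by (rule finite_subset[OF S'sub finSp])
      have "card S' \<le> card (S - {p})" by (rule card_mono[OF finSp S'sub])
      also have "\<dots> = card S - 1" using pS Suc.prems(3) by simp
      finally have cS': "card S' \<le> n" using Suc.prems(4) by simp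
      have inv: "b \<in> S' \<or> (\<forall>x\<in>S'. g x \<le> g b + 2 * u)"
      proof (cases "b \<in> S'")
        case True then show ?thesis by simp
      next
        case bn: False
        show ?thesis
        proof (cases "b \<in> S")
          case False
          then show ?thesis using Suc.prems(5) S'sub by auto
        next
          case bS: True
          have "g x \<le> g b + 2 * u" if xS': "x \<in> S'" for x
          proof -
            have xD: "x \<in> D" using xS' S'sub Suc.prems(1) by auto
            have "A p x = x" using xS' by (simp add: S'_def)
            hence "g x - min (g p) (g x) \<le> u" using Agood[OF pD xD] by simp
            hence gx: "g x \<le> g p + u" by (simp add: min_def split: if_splits)
            show ?thesis
            proof (cases "b = p")
              case True then show ?thesis using gx u by simp
            next
              case False then show ?thesis using gx pbound[OF bS False bn] by linarith
            qed
          qed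
          then show ?thesis by blast
        qed
      qed
      have S'D: "S' \<subseteq> D" using S'sub Suc.prems(1) by blast
      have "g (atoms n pv A S') \<le> g b + 2 * u"
        by (rule Suc.IH[OF S'D ne fin cS' inv])
      then show ?thesis using eq ne by simp
    qed
  qed
qed

lemma pre_sets:
  assumes "h \<in> M \<rightarrow>\<^sub>M count_space UNIV"
  shows "{\<omega> \<in> space M. P (h \<omega>)} \<in> sets M"
proof -
  have "{\<omega> \<in> space M. P (h \<omega>)} = h -` {y. P y} \<inter> space M" by auto
  then show ?thesis using measurable_sets[OF assms, of "{y. P y}"] by simp
qed

lemma atoms_meas:
  assumes piv_meas: "\<And>S. S \<subseteq> D \<Longrightarrow> S \<noteq> {} \<Longrightarrow> piv S \<in> M \<rightarrow>\<^sub>M count_space UNIV"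
    and piv_in: "\<And>S \<omega>. S \<subseteq> D \<Longrightarrow> S \<noteq> {} \<Longrightarrow> piv S \<omega> \<in> S"
    and cmp_meas: "\<And>i j. i \<in> D \<Longrightarrow> j \<in> D \<Longrightarrow> cmp i j \<in> M \<rightarrow>\<^sub>M count_space UNIV"
    and finD: "finite D"
  shows "S \<subseteq> D \<Longrightarrow> S \<noteq> {} \<Longrightarrow>
    (\<lambda>\<omega>. atoms n (\<lambda>S. piv S \<omega>) (\<lambda>i j. cmp i j \<omega>) S) \<in> M \<rightarrow>\<^sub>M count_space UNIV"
proof (induction n arbitrary: S)
  case 0
  then show ?case using piv_meas by (simp add: atoms.simps(1))
next
  case (Suc n)
  have finS: "finite S" using Suc.prems finD finite_subset by blast
  show ?case
  proof (cases "card S = 1")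
    case True
    then show ?thesis by (simp only: True atoms.simps(2) if_True refl simp_thms measurable_count_space_const)
  next
    case False
    define H where "H p \<omega> = (if p \<in> S then (let S' = {x \<in> S - {p}. cmp p x \<omega> = x} in
        if S' = {} then p else atoms n (\<lambda>S. piv S \<omega>) (\<lambda>i j. cmp i j \<omega>) S') else 0)" for p \<omega>
    have eq: "(\<lambda>\<omega>. atoms (Suc n) (\<lambda>S. piv S \<omega>) (\<lambda>i j. cmp i j \<omega>) S) = (\<lambda>\<omega>. H (piv S \<omega>) \<omega>)"
    proof
      fix \<omega>
      have "piv S \<omega> \<in> S" using piv_in Suc.prems by blast
      then show "atoms (Suc n) (\<lambda>S. piv S \<omega>) (\<lambda>i j. cmp i j \<omega>) S = H (piv S \<omega>) \<omega>"
        using False unfolding H_def atoms.simps(2) Let_def by (simp only: if_False if_True simp_thms)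
    qed
    have Hm: "H p \<in> M \<rightarrow>\<^sub>M count_space UNIV" for p
    proof (cases "p \<in> S")
      case False
      then show ?thesis unfolding H_def by simp
    next
      case pS: True
      have pD: "p \<in> D" using pS Suc.prems by auto
      define Sp where "Sp \<omega> = {x \<in> S - {p}. cmp p x \<omega> = x}" for \<omega>
      define K where "K T \<omega> = (if T = {} then p else atoms n (\<lambda>S. piv S \<omega>) (\<lambda>i j. cmp i j \<omega>) T)" for T \<omega>
      have Heq: "H p = (\<lambda>\<omega>. K (Sp \<omega>) \<omega>)"
        unfolding H_def K_def Sp_def using pS by (simp only: Let_def if_True)
      have Km: "K T \<in> M \<rightarrow>\<^sub>M count_space UNIV" if "T \<in> Pow (S - {p})" for T
      proof (cases "T = {}")
        case True then show ?thesis unfolding K_def by simp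
      next
        case False
        have "T \<subseteq> D" using that Suc.prems by auto
        then show ?thesis unfolding K_def using Suc.IH[OF _ False] False by simp
      qed
      have Spm: "Sp \<in> M \<rightarrow>\<^sub>M count_space (Pow (S - {p}))"
        unfolding measurable_count_space_eq2[OF finite_Pow_iff[THEN iffD2, OF finite_Diff[OF finS]]]
      proof (intro conjI ballI)
        show "Sp \<in> space M \<rightarrow> Pow (S - {p})" by (auto simp: Sp_def)
      next
        fix T assume T: "T \<in> Pow (S - {p})"
        have iff: "Sp \<omega> = T \<longleftrightarrow> (\<forall>x\<in>S - {p}. (cmp p x \<omega> = x) = (x \<in> T))" for \<omega>
          using T unfolding Sp_def by blast
        have "Sp -` {T} \<inter> space M = {\<omega> \<in> space M. \<forall>x\<in>S - {p}. (cmp p x \<omega> = x) = (x \<in> T)}"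
          using iff by blast
        also have "\<dots> \<in> sets M"
        proof (rule sets.sets_Collect_finite_All)
          fix x assume "x \<in> S - {p}"
          then have "x \<in> D" using Suc.prems by auto
          then show "{\<omega> \<in> space M. (cmp p x \<omega> = x) = (x \<in> T)} \<in> sets M"
            using pre_sets[OF cmp_meas[OF pD], of x "\<lambda>y. (y = x) = (x \<in> T)"] by simp
        qed (use finS in auto)
        finally show "Sp -` {T} \<inter> space M \<in> sets M" .
      qed
      show ?thesis unfolding Heq
        by (rule measurable_compose_countable'[OF Km Spm]) (use finS in \<open>auto intro: countable_finite\<close>)
    qed
    show ?thesis unfolding eq by (rule measurable_compose_countable[OF Hm piv_meas[OF Suc.prems]])
  qed
qed

theorem mainTheorem11:
  fixes M :: "'w measure"
    and \<Lambda> :: nat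
    and f :: "nat \<Rightarrow> 'm"
    and L :: "'m \<Rightarrow> real"
    and U :: "real \<Rightarrow> real"
    and \<delta> :: real
    and cmp :: "nat \<Rightarrow> nat \<Rightarrow> 'w \<Rightarrow> nat"
    and piv :: "nat set \<Rightarrow> 'w \<Rightarrow> nat"
  assumes "prob_space M"
    and "\<Lambda> \<ge> 1"
    and "\<forall>x\<in>{0<..<1}. U x \<ge> 0"
    and "0 < \<delta>" and "\<delta> < 1"
    and cmp_meas: "\<And>i j. i \<in> {1..\<Lambda>} \<Longrightarrow> j \<in> {1..\<Lambda>} \<Longrightarrow>
                    cmp i j \<in> measurable M (count_space UNIV)"
    and cmp_out: "\<And>i j \<omega>. i \<in> {1..\<Lambda>} \<Longrightarrow> j \<in> {1..\<Lambda>} \<Longrightarrow> cmp i j \<omega> \<in> {i, j}"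
    and cmp_guarantee: "\<And>i j. i \<in> {1..\<Lambda>} \<Longrightarrow> j \<in> {1..\<Lambda>} \<Longrightarrow>
          measure M {\<omega> \<in> space M. L (f (cmp i j \<omega>)) - min (L (f i)) (L (f j)) \<le> U \<delta>} \<ge> 1 - \<delta>"
    and piv_meas: "\<And>S. S \<subseteq> {1..\<Lambda>} \<Longrightarrow> S \<noteq> {} \<Longrightarrow>
                    piv S \<in> measurable M (count_space UNIV)"
    and piv_in: "\<And>S \<omega>. S \<subseteq> {1..\<Lambda>} \<Longrightarrow> S \<noteq> {} \<Longrightarrow> piv S \<omega> \<in> S"
    and piv_unif: "\<And>S i. S \<subseteq> {1..\<Lambda>} \<Longrightarrow> S \<noteq> {} \<Longrightarrow> i \<in> S \<Longrightarrow>
                    measure M {\<omega> \<in> space M. piv S \<omega> = i} = 1 / real (card S)"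
  shows "measure M {\<omega> \<in> space M.
            L (f (atoms \<Lambda> (\<lambda>S. piv S \<omega>) (\<lambda>i j. cmp i j \<omega>) {1..\<Lambda>}))
              - Min ((\<lambda>k. L (f k)) ` {1..\<Lambda>}) \<le> 2 * U \<delta>}
         \<ge> 1 - real \<Lambda> ^ 2 * \<delta>"
proof -
  interpret prob_space M by (rule assms(1))
  define D where "D = {1..\<Lambda>}"
  define g where "g k = L (f k)" for k
  define u where "u = U \<delta>"
  have u0: "u \<ge> 0" using assms(3,4,5) by (auto simp: u_def)
  have finD: "finite D" and neD: "D \<noteq> {}" and cardD: "card D = \<Lambda>"
    using assms(2) by (auto simp: D_def)
  have "Min (g ` D) \<in> g ` D" using finD neD by simp
  then obtain b where bD: "b \<in> D" and gb: "g b = Min (g ` D)" by auto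
  have bmin: "\<And>k. k \<in> D \<Longrightarrow> g b \<le> g k" using gb finD by simp
  have piv_measD: "\<And>S. S \<subseteq> D \<Longrightarrow> S \<noteq> {} \<Longrightarrow> piv S \<in> M \<rightarrow>\<^sub>M count_space UNIV"
    using piv_meas unfolding D_def .
  have piv_inD: "\<And>S \<omega>. S \<subseteq> D \<Longrightarrow> S \<noteq> {} \<Longrightarrow> piv S \<omega> \<in> S"
    using piv_in unfolding D_def .
  have cmp_measD: "\<And>i j. i \<in> D \<Longrightarrow> j \<in> D \<Longrightarrow> cmp i j \<in> M \<rightarrow>\<^sub>M count_space UNIV"
    using cmp_meas unfolding D_def .
  have cmp_outD: "\<And>i j \<omega>. i \<in> D \<Longrightarrow> j \<in> D \<Longrightarrow> cmp i j \<omega> \<in> {i, j}"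
    using cmp_out unfolding D_def .
  define out where "out \<omega> = atoms \<Lambda> (\<lambda>S. piv S \<omega>) (\<lambda>i j. cmp i j \<omega>) D" for \<omega>
  define T where "T = {\<omega> \<in> space M. g (out \<omega>) - Min (g ` D) \<le> 2 * u}"
  have Teq: "{\<omega> \<in> space M.
            L (f (atoms \<Lambda> (\<lambda>S. piv S \<omega>) (\<lambda>i j. cmp i j \<omega>) {1..\<Lambda>}))
              - Min ((\<lambda>k. L (f k)) ` {1..\<Lambda>}) \<le> 2 * U \<delta>} = T"
    unfolding T_def out_def D_def u_def g_def[abs_def] by (rule refl)
  define bad where "bad p = {\<omega> \<in> space M. \<not> (g (cmp (fst p) (snd p) \<omega>) - min (g (fst p)) (g (snd p)) \<le> u)}" for p
  have bad_sets: "bad p \<in> sets M" if "p \<in> D \<times> D" for p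
    unfolding bad_def using that
    by (intro pre_sets[OF cmp_measD]) auto
  have bad_le: "measure M (bad p) \<le> \<delta>" if "p \<in> D \<times> D" for p
  proof -
    define good where "good = {\<omega> \<in> space M. g (cmp (fst p) (snd p) \<omega>) - min (g (fst p)) (g (snd p)) \<le> u}"
    have gs: "good \<in> sets M" unfolding good_def using that
      by (intro pre_sets[OF cmp_measD]) auto
    have "bad p = space M - good" by (auto simp: bad_def good_def)
    hence "measure M (bad p) = 1 - measure M good" using prob_compl[OF gs] by simp
    moreover have "measure M good \<ge> 1 - \<delta>"
      using cmp_guarantee[of "fst p" "snd p"] that by (auto simp: good_def g_def u_def D_def)
    ultimately show ?thesis by simp
  qed
  define B where "B = (\<Union>p\<in>D \<times> D. bad p)"
  have Bs: "B \<in> sets M" unfolding B_def using bad_sets finD by (intro sets.finite_UN) auto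
  have "measure M B \<le> (\<Sum>p\<in>D \<times> D. measure M (bad p))"
    unfolding B_def using bad_sets finD by (intro finite_measure_subadditive_finite) auto
  also have "\<dots> \<le> (\<Sum>p\<in>D \<times> D. \<delta>)" using bad_le by (intro sum_mono) auto
  also have "\<dots> = real \<Lambda> ^ 2 * \<delta>" using cardD finD by (simp add: card_cartesian_product power2_eq_square)
  finally have Ble: "measure M B \<le> real \<Lambda> ^ 2 * \<delta>" .
  have sub: "space M - B \<subseteq> T"
  proof
    fix \<omega> assume w: "\<omega> \<in> space M - B"
    have good: "g (cmp i j \<omega>) - min (g i) (g j) \<le> u" if "i \<in> D" "j \<in> D" for i j
      using w that by (auto simp: B_def bad_def)
    have "g (out \<omega>) \<le> g b + 2 * u"
      unfolding out_def
      by (rule atoms_det[where D = D, OF piv_inD cmp_outD good u0 bD bmin subset_refl neD finD])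
        (use cardD bD in auto)
    then show "\<omega> \<in> T" using w gb by (auto simp: T_def)
  qed
  have Ts: "T \<in> sets M"
  proof -
    have "out \<in> M \<rightarrow>\<^sub>M count_space UNIV"
      unfolding out_def
      by (rule atoms_meas[where D = D, OF piv_measD piv_inD cmp_measD finD subset_refl neD])
    then show ?thesis unfolding T_def by (rule pre_sets)
  qed
  have "measure M (space M - B) = 1 - measure M B" using prob_compl[OF Bs] by simp
  moreover have "measure M (space M - B) \<le> measure M T" using sub Ts by (rule finite_measure_mono)
  ultimately show ?thesis unfolding Teq using Ble by linarith
qed

end
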